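(* Let $q\ge 2$ be a prime power. For all $x,y\in\mathbb{F}_q$, any two distinct vertices of $\{(x,y,j)_0: j\in\mathbb{F}_q\}$ are at distance at least $6$ in $B_q$.
   Context: $\mathbb{F}_q$ is the field with $q$ elements. $B_q$ is the bipartite graph with parts $\{(x,y,z)_0: x,y,z\in\mathbb{F}_q\}$ and $\{(a,b,c)_1: a,b,c\in\mathbb{F}_q\}$, in which $(a,b,c)_1$ is adjacent exactly to $(j,\,aj+b,\,a^2j+2ab+c)_0$, $j\in\mathbb{F}_q$. *)

theory Defs
  imports Main "HOL-Library.Extended_Nat" "HOL-Library.Cardinality"
begin

text \<open>Vertices of B_q: the two parts, points (x,y,z)_0 and lines (a,b,c)_1.\<close>
datatype 'a bvert = V0 "'a \<times> 'a \<times> 'a" | V1 "'a \<times> 'a \<times> 'a"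

definition incident :: "'a::field \<times> 'a \<times> 'a \<Rightarrow> 'a \<times> 'a \<times> 'a \<Rightarrow> bool" where
  "incident l p = (case l of (a, b, c) \<Rightarrow>
      (\<exists>j. p = (j, a * j + b, a^2 * j + 2 * a * b + c)))"

definition B_edges :: "('a::field) bvert rel" where
  "B_edges = {(V1 l, V0 p) | l p. incident l p} \<union> {(V0 p, V1 l) | l p. incident l p}"

text \<open>Graph distance: length of a shortest walk (infinite if none exists).\<close>
definition B_dist :: "('a::field) bvert \<Rightarrow> 'a bvert \<Rightarrow> enat" where
  "B_dist u v = (INF n \<in> {n. (u, v) \<in> B_edges ^^ n}. enat n)"

end

theory Submission
  imports Defs
begin

lemma key:
  fixes x y z z' :: "'a::field"
  assumes "incident l1 (x,y,z)" "incident l1 Q" "incident l2 Q" "incident l2 (x,y,z')"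
  shows "z = z'"
proof -
  obtain a1 b1 c1 where l1: "l1 = (a1,b1,c1)" by (cases l1) auto
  obtain a2 b2 c2 where l2: "l2 = (a2,b2,c2)" by (cases l2) auto
  obtain j w t where Q: "Q = (j,w,t)" by (cases Q) auto
  from assms(1) have p1: "y = a1*x+b1" "z = a1^2*x+2*a1*b1+c1" by (auto simp: incident_def l1)
  from assms(4) have p2: "y = a2*x+b2" "z' = a2^2*x+2*a2*b2+c2" by (auto simp: incident_def l2)
  from assms(2) have q1: "w = a1*j+b1" "t = a1^2*j+2*a1*b1+c1" by (auto simp: incident_def l1 Q)
  from assms(3) have q2: "w = a2*j+b2" "t = a2^2*j+2*a2*b2+c2" by (auto simp: incident_def l2 Q)
  have e1: "a1*j+b1 = a2*j+b2" "a1*x+b1 = a2*x+b2" using p1 p2 q1 q2 by auto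
  have "(a1-a2)*(j-x) = (a1*j+b1) - (a2*j+b2) - ((a1*x+b1) - (a2*x+b2))" by (simp add: algebra_simps)
  then have "(a1-a2)*(j-x) = 0" using e1 by simp
  then consider "a1 = a2" | "j = x" by auto
  then show ?thesis
  proof cases
    case 1
    then have "b1 = b2" using p1 p2 by simp
    then have "c1 = c2" using 1 q1 q2 by simp
    then show ?thesis using 1 \<open>b1=b2\<close> p1 p2 by simp
  next
    case 2
    then show ?thesis using p1 p2 q1 q2 by simp
  qed
qed

lemma R_simp: "(u,v) \<in> B_edges \<longleftrightarrow>
   (\<exists>l p. u = V1 l \<and> v = V0 p \<and> incident l p) \<or> (\<exists>l p. u = V0 p \<and> v = V1 l \<and> incident l p)"
  by (auto simp: B_edges_def)

lemma small:
  fixes x y z z' :: "'a::field"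
  assumes "z \<noteq> z'" "(V0 (x,y,z), V0 (x,y,z')) \<in> (B_edges :: 'a bvert rel) ^^ n"
  shows "n \<ge> 6"
proof (rule ccontr)
  assume "\<not> n \<ge> 6"
  then have "n \<in> {0,1,2,3,4,5}" by auto
  then show False
  proof (elim insertE emptyE)
    assume "n = 0" then show False using assms by auto
  next
    assume "n = 1" then show False using assms by (auto simp: R_simp)
  next
    assume "n = 2" then show False using assms
      by (auto simp: R_simp numeral_2_eq_2 relpow.simps(2) relcomp_unfold dest: key)
  next
    assume "n = 3" then show False using assms
      by (auto simp: R_simp numeral_3_eq_3 relpow.simps(2) relcomp_unfold)
  next
    assume "n = 4" then show False using assms
      by (auto simp: R_simp eval_nat_numeral relpow.simps(2) relcomp_unfold dest: key)
  next
    assume "n = 5" then show False using assms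
      by (auto simp: R_simp eval_nat_numeral relpow.simps(2) relcomp_unfold)
  qed
qed

theorem claim2:
  fixes q :: nat and x y z z' :: "'a::{finite, field}"
  assumes "CARD('a) = q" and "q \<ge> 2"
    and "z \<noteq> z'"
  shows "B_dist (V0 (x, y, z)) (V0 (x, y, z')) \<ge> 6"
  unfolding B_dist_def
proof (rule INF_greatest)
  fix n assume "n \<in> {n. (V0 (x, y, z), V0 (x, y, z')) \<in> (B_edges :: 'a bvert rel) ^^ n}"
  then have "n \<ge> 6" using small assms(3) by blast
  then show "6 \<le> enat n" by (simp add: numeral_eq_enat)
qed

end
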